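(* For every ATL*_i formula φ and every concurrent game structure G in which each agent is assigned an equivalence relation on positions, it holds that G ⊨ φ iff G' ⊨ tr(φ).
   Context: ATL*_i is ATL* with imperfect-information, perfect-recall strategies (objective semantics), where each agent a_i has an indistinguishability relation; ⟨⟨A⟩⟩ψ means there are strategies for the agents in A such that ψ holds whatever the other agents do. tr : ATL*_i → SL_i (Strategy Logic with imperfect information) replaces each subformula ⟨⟨A⟩⟩ψ, with A = {a_1,…,a_k} and the remaining agents a_{k+1},…,a_n, by ∃^{o_1}x_1 … ∃^{o_k}x_k ∀^{o_p}x_{k+1} … ∀^{o_p}x_n (a_1,x_1)…(a_n,x_n) tr(ψ). G' is the concurrent game structure with imperfect information obtained from G by interpreting each observation symbol o_i as the equivalence relation of agent a_i in G, and o_p as the identity relation. In SL_i, ∃^o x quantifies over perfect-recall strategies uniform w.r.t. the relation denoted by o, (a,x) binds agent a to strategy x, and ∀^o x = ¬∃^o x ¬. *)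

theory Defs
  imports Main
begin

section \<open>Concurrent game structures (no protocol: every action available everywhere)\<close>

record ('ag, 'act, 'pos, 'ap) cgs =
  mv   :: "'pos \<Rightarrow> ('ag \<Rightarrow> 'act) \<Rightarrow> 'pos"
  lab  :: "'pos \<Rightarrow> 'ap set"
  init :: "'pos"

text \<open>Histories are nonempty lists of positions (current position = last element);
  plays are infinite sequences of positions. Strategies map histories to actions
  (perfect recall).\<close>

type_synonym ('pos, 'act) strat = "'pos list \<Rightarrow> 'act"

definition prefix_of :: "(nat \<Rightarrow> 'pos) \<Rightarrow> nat \<Rightarrow> 'pos list" where
  "prefix_of \<pi> i = map \<pi> [0..<Suc i]"

definition hist_indist :: "('pos \<times> 'pos) set \<Rightarrow> 'pos list \<Rightarrow> 'pos list \<Rightarrow> bool" where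
  "hist_indist R h h' \<longleftrightarrow> length h = length h' \<and> (\<forall>i<length h. (h ! i, h' ! i) \<in> R)"

definition uniform :: "('pos \<times> 'pos) set \<Rightarrow> ('pos, 'act) strat \<Rightarrow> bool" where
  "uniform R \<sigma> \<longleftrightarrow> (\<forall>h h'. hist_indist R h h' \<longrightarrow> \<sigma> h = \<sigma> h')"

datatype ('ap, 'ag) atl_state =
    SP 'ap
  | SNeg "('ap, 'ag) atl_state"
  | SDisj "('ap, 'ag) atl_state" "('ap, 'ag) atl_state"
  | Coal "'ag set" "('ap, 'ag) atl_path"
and ('ap, 'ag) atl_path =
    PState "('ap, 'ag) atl_state"
  | PNeg "('ap, 'ag) atl_path"
  | PDisj "('ap, 'ag) atl_path" "('ap, 'ag) atl_path"
  | PX "('ap, 'ag) atl_path"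
  | PU "('ap, 'ag) atl_path" "('ap, 'ag) atl_path"

definition Out :: "('ag, 'act, 'pos, 'ap) cgs \<Rightarrow> 'pos list \<Rightarrow> 'ag set
                    \<Rightarrow> ('ag \<Rightarrow> ('pos, 'act) strat) \<Rightarrow> (nat \<Rightarrow> 'pos) set" where
  "Out G h A \<sigma> = {\<pi>. (\<forall>i<length h. \<pi> i = h ! i) \<and>
      (\<forall>i\<ge>length h - 1. \<exists>c. (\<forall>a\<in>A. c a = \<sigma> a (prefix_of \<pi> i)) \<and> \<pi> (Suc i) = mv G (\<pi> i) c)}"

primrec atl_sat_state :: "('ag, 'act, 'pos, 'ap) cgs \<Rightarrow> ('ag \<Rightarrow> ('pos \<times> 'pos) set)
       \<Rightarrow> 'pos list \<Rightarrow> ('ap, 'ag) atl_state \<Rightarrow> bool"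
and atl_sat_path :: "('ag, 'act, 'pos, 'ap) cgs \<Rightarrow> ('ag \<Rightarrow> ('pos \<times> 'pos) set)
       \<Rightarrow> (nat \<Rightarrow> 'pos) \<Rightarrow> nat \<Rightarrow> ('ap, 'ag) atl_path \<Rightarrow> bool" where
  "atl_sat_state G R h (SP p) = (p \<in> lab G (last h))"
| "atl_sat_state G R h (SNeg \<phi>) = (\<not> atl_sat_state G R h \<phi>)"
| "atl_sat_state G R h (SDisj \<phi> \<psi>) = (atl_sat_state G R h \<phi> \<or> atl_sat_state G R h \<psi>)"
| "atl_sat_state G R h (Coal A \<psi>) =
     (\<exists>\<sigma>. (\<forall>a\<in>A. uniform (R a) (\<sigma> a)) \<and>
          (\<forall>\<pi>\<in>Out G h A \<sigma>. atl_sat_path G R \<pi> (length h - 1) \<psi>))"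
| "atl_sat_path G R \<pi> i (PState \<phi>) = atl_sat_state G R (prefix_of \<pi> i) \<phi>"
| "atl_sat_path G R \<pi> i (PNeg \<psi>) = (\<not> atl_sat_path G R \<pi> i \<psi>)"
| "atl_sat_path G R \<pi> i (PDisj \<psi> \<chi>) = (atl_sat_path G R \<pi> i \<psi> \<or> atl_sat_path G R \<pi> i \<chi>)"
| "atl_sat_path G R \<pi> i (PX \<psi>) = atl_sat_path G R \<pi> (Suc i) \<psi>"
| "atl_sat_path G R \<pi> i (PU \<psi> \<chi>) =
     (\<exists>k\<ge>i. atl_sat_path G R \<pi> k \<chi> \<and> (\<forall>j. i \<le> j \<and> j < k \<longrightarrow> atl_sat_path G R \<pi> j \<psi>))"

definition atl_models :: "('ag, 'act, 'pos, 'ap) cgs \<Rightarrow> ('ag \<Rightarrow> ('pos \<times> 'pos) set)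
       \<Rightarrow> ('ap, 'ag) atl_state \<Rightarrow> bool" where
  "atl_models G R \<phi> = atl_sat_state G R [init G] \<phi>"

datatype ('ap, 'ag, 'var, 'obs) sl =
    SLProp 'ap
  | SLNot "('ap, 'ag, 'var, 'obs) sl"
  | SLOr "('ap, 'ag, 'var, 'obs) sl" "('ap, 'ag, 'var, 'obs) sl"
  | SLX "('ap, 'ag, 'var, 'obs) sl"
  | SLU "('ap, 'ag, 'var, 'obs) sl" "('ap, 'ag, 'var, 'obs) sl"
  | SLEx 'obs 'var "('ap, 'ag, 'var, 'obs) sl"     (* \<exists>^o x \<phi> *)
  | SLBind 'ag 'var "('ap, 'ag, 'var, 'obs) sl"    (* (a,x) \<phi> *)

definition SLAll :: "'obs \<Rightarrow> 'var \<Rightarrow> ('ap, 'ag, 'var, 'obs) sl \<Rightarrow> ('ap, 'ag, 'var, 'obs) sl" where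
  "SLAll ob x \<phi> = SLNot (SLEx ob x (SLNot \<phi>))"

fun ext_hist :: "('ag, 'act, 'pos, 'ap) cgs \<Rightarrow> ('ag \<Rightarrow> ('pos, 'act) strat) \<Rightarrow> 'pos list \<Rightarrow> nat \<Rightarrow> 'pos list" where
  "ext_hist G \<beta> h 0 = h"
| "ext_hist G \<beta> h (Suc k) =
     (let h' = ext_hist G \<beta> h k in h' @ [mv G (last h') (\<lambda>a. \<beta> a h')])"

text \<open>Semantics at a history with an assignment: \<beta> binds agents, \<chi> binds variables.
  Temporal operators follow the unique outcome of the agent bindings.\<close>
primrec sl_sat :: "('ag, 'act, 'pos, 'ap) cgs \<Rightarrow> ('obs \<Rightarrow> ('pos \<times> 'pos) set)
     \<Rightarrow> ('ag \<Rightarrow> ('pos, 'act) strat) \<Rightarrow> ('var \<Rightarrow> ('pos, 'act) strat)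
     \<Rightarrow> 'pos list \<Rightarrow> ('ap, 'ag, 'var, 'obs) sl \<Rightarrow> bool" where
  "sl_sat G Obs \<beta> \<chi> h (SLProp p) = (p \<in> lab G (last h))"
| "sl_sat G Obs \<beta> \<chi> h (SLNot \<phi>) = (\<not> sl_sat G Obs \<beta> \<chi> h \<phi>)"
| "sl_sat G Obs \<beta> \<chi> h (SLOr \<phi> \<psi>) = (sl_sat G Obs \<beta> \<chi> h \<phi> \<or> sl_sat G Obs \<beta> \<chi> h \<psi>)"
| "sl_sat G Obs \<beta> \<chi> h (SLX \<phi>) = sl_sat G Obs \<beta> \<chi> (ext_hist G \<beta> h 1) \<phi>"
| "sl_sat G Obs \<beta> \<chi> h (SLU \<phi> \<psi>) =
     (\<exists>k. sl_sat G Obs \<beta> \<chi> (ext_hist G \<beta> h k) \<psi> \<and>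
          (\<forall>j<k. sl_sat G Obs \<beta> \<chi> (ext_hist G \<beta> h j) \<phi>))"
| "sl_sat G Obs \<beta> \<chi> h (SLEx ob x \<phi>) = (\<exists>\<sigma>. uniform (Obs ob) \<sigma> \<and> sl_sat G Obs \<beta> (\<chi>(x := \<sigma>)) h \<phi>)"
| "sl_sat G Obs \<beta> \<chi> h (SLBind a x \<phi>) = sl_sat G Obs (\<beta>(a := \<chi> x)) \<chi> h \<phi>"

text \<open>Model relation for sentences: evaluated at the initial position; since the
  assignment is total we quantify over all of them (irrelevant for sentences).\<close>
definition sl_models :: "('ag, 'act, 'pos, 'ap) cgs \<Rightarrow> ('obs \<Rightarrow> ('pos \<times> 'pos) set)
     \<Rightarrow> ('ap, 'ag, 'var, 'obs) sl \<Rightarrow> bool" where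
  "sl_models G Obs \<phi> = (\<forall>\<beta> \<chi>. sl_sat G Obs \<beta> \<chi> [init G] \<phi>)"

text \<open>Observation symbols: o_a for each agent a, and o_p (perfect information).\<close>
datatype 'ag obs_sym = ObsAg 'ag | ObsP

fun obs_interp :: "('ag \<Rightarrow> ('pos \<times> 'pos) set) \<Rightarrow> 'ag obs_sym \<Rightarrow> ('pos \<times> 'pos) set" where
  "obs_interp R (ObsAg a) = R a"
| "obs_interp R ObsP = Id"

text \<open>Variables are indexed by agents: x_a is the variable of agent a.
  Agents are enumerated by the enum class list.\<close>
definition coal_prefix :: "'ag::enum set \<Rightarrow> ('ap, 'ag, 'ag, 'ag obs_sym) sl \<Rightarrow> ('ap, 'ag, 'ag, 'ag obs_sym) sl" where
  "coal_prefix A \<phi> =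
     foldr (\<lambda>a f. SLEx (ObsAg a) a f) (filter (\<lambda>a. a \<in> A) Enum.enum)
      (foldr (\<lambda>a f. SLAll ObsP a f) (filter (\<lambda>a. a \<notin> A) Enum.enum)
        (foldr (\<lambda>a f. SLBind a a f) Enum.enum \<phi>))"

primrec tr_state :: "('ap, 'ag::enum) atl_state \<Rightarrow> ('ap, 'ag, 'ag, 'ag obs_sym) sl"
and tr_path :: "('ap, 'ag::enum) atl_path \<Rightarrow> ('ap, 'ag, 'ag, 'ag obs_sym) sl" where
  "tr_state (SP p) = SLProp p"
| "tr_state (SNeg \<phi>) = SLNot (tr_state \<phi>)"
| "tr_state (SDisj \<phi> \<psi>) = SLOr (tr_state \<phi>) (tr_state \<psi>)"
| "tr_state (Coal A \<psi>) = coal_prefix A (tr_path \<psi>)"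
| "tr_path (PState \<phi>) = tr_state \<phi>"
| "tr_path (PNeg \<psi>) = SLNot (tr_path \<psi>)"
| "tr_path (PDisj \<psi> \<chi>) = SLOr (tr_path \<psi>) (tr_path \<chi>)"
| "tr_path (PX \<psi>) = SLX (tr_path \<psi>)"
| "tr_path (PU \<psi> \<chi>) = SLU (tr_path \<psi>) (tr_path \<chi>)"

end

theory Submission
  imports Defs
begin

lemma ext_len[simp]: "length (ext_hist G \<beta> h k) = length h + k"
  by (induction k) (auto simp: Let_def)

lemma ext_add: "ext_hist G \<beta> h (k + m) = ext_hist G \<beta> (ext_hist G \<beta> h k) m"
  by (induction m) (auto simp: Let_def)

lemma ext_nth: "j < length h + k \<Longrightarrow> ext_hist G \<beta> h (k + m) ! j = ext_hist G \<beta> h k ! j"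
proof (induction m)
  case 0 then show ?case by simp
next
  case (Suc m)
  have "ext_hist G \<beta> h (k + Suc m) ! j = ext_hist G \<beta> h (k + m) ! j"
    using Suc.prems by (simp add: Let_def nth_append)
  then show ?case using Suc by simp
qed

definition outp :: "('ag, 'act, 'pos, 'ap) cgs \<Rightarrow> ('ag \<Rightarrow> ('pos, 'act) strat) \<Rightarrow> 'pos list \<Rightarrow> nat \<Rightarrow> 'pos" where
  "outp G \<beta> h j = ext_hist G \<beta> h j ! j"

lemma outp_nth:
  assumes "h \<noteq> []" "j < length h + k"
  shows "outp G \<beta> h j = ext_hist G \<beta> h k ! j"
proof (cases "j \<le> k")
  case True
  have "ext_hist G \<beta> h (j + (k - j)) ! j = ext_hist G \<beta> h j ! j"
    using assms by (intro ext_nth) simp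
  then show ?thesis using True by (simp add: outp_def)
next
  case False
  have "ext_hist G \<beta> h (k + (j - k)) ! j = ext_hist G \<beta> h k ! j"
    using assms by (intro ext_nth) simp
  then show ?thesis using False by (simp add: outp_def)
qed

lemma outp_prefix:
  assumes "h \<noteq> []"
  shows "prefix_of (outp G \<beta> h) (length h - 1 + k) = ext_hist G \<beta> h k"
proof (rule nth_equalityI)
  show "length (prefix_of (outp G \<beta> h) (length h - 1 + k)) = length (ext_hist G \<beta> h k)"
    using assms by (simp add: prefix_of_def)
next
  fix j assume "j < length (prefix_of (outp G \<beta> h) (length h - 1 + k))"
  then have j: "j < length h + k" using assms by (cases h) (auto simp: prefix_of_def)
  then have "prefix_of (outp G \<beta> h) (length h - 1 + k) ! j = outp G \<beta> h j"
    using assms by (simp add: prefix_of_def nth_map_upt del: upt_Suc)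
  then show "prefix_of (outp G \<beta> h) (length h - 1 + k) ! j = ext_hist G \<beta> h k ! j"
    using outp_nth[OF assms j] by simp
qed

lemma prefix_Suc: "prefix_of \<pi> (Suc n) = prefix_of \<pi> n @ [\<pi> (Suc n)]"
  by (simp add: prefix_of_def)

lemma last_prefix: "last (prefix_of \<pi> n) = \<pi> n"
  by (simp add: prefix_of_def)

lemma outp_in_Out:
  assumes "h \<noteq> []" "\<forall>a\<in>A. \<beta> a = \<sigma> a"
  shows "outp G \<beta> h \<in> Out G h A \<sigma>"
proof -
  have 1: "\<forall>i<length h. outp G \<beta> h i = h ! i"
    using outp_nth[OF assms(1), of _ 0] by auto
  have 2: "\<exists>c. (\<forall>a\<in>A. c a = \<sigma> a (prefix_of (outp G \<beta> h) i)) \<and>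
       outp G \<beta> h (Suc i) = mv G (outp G \<beta> h i) c" if "i \<ge> length h - 1" for i
  proof -
    define k where "k = i - (length h - 1)"
    have ik: "i = length h - 1 + k" using that k_def by simp
    have p: "prefix_of (outp G \<beta> h) i = ext_hist G \<beta> h k" using outp_prefix[OF assms(1)] ik by simp
    have p2: "prefix_of (outp G \<beta> h) (Suc i) = ext_hist G \<beta> h (Suc k)"
      using outp_prefix[OF assms(1), of G \<beta> "Suc k"] ik assms(1) by simp
    have "outp G \<beta> h (Suc i) = last (ext_hist G \<beta> h (Suc k))"
      using p2 last_prefix by metis
    also have "\<dots> = mv G (last (ext_hist G \<beta> h k)) (\<lambda>a. \<beta> a (ext_hist G \<beta> h k))"
      by (simp add: Let_def)
    also have "last (ext_hist G \<beta> h k) = outp G \<beta> h i" using p last_prefix by metis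
    finally show ?thesis using p assms(2)
      by (intro exI[of _ "\<lambda>a. \<beta> a (ext_hist G \<beta> h k)"]) simp
  qed
  show ?thesis unfolding Out_def using 1 2 by blast
qed

lemma Out_strat:
  assumes "h \<noteq> []" "\<pi> \<in> Out G h A \<sigma>"
  shows "\<exists>\<tau>. \<forall>k. prefix_of \<pi> (length h - 1 + k) =
     ext_hist G (\<lambda>a. if a \<in> A then \<sigma> a else \<tau> a) h k"
proof -
  from assms(2) have h1: "\<forall>i<length h. \<pi> i = h ! i"
    and h2: "\<forall>i\<ge>length h - 1. \<exists>c. (\<forall>a\<in>A. c a = \<sigma> a (prefix_of \<pi> i)) \<and> \<pi> (Suc i) = mv G (\<pi> i) c"
    unfolding Out_def by auto
  from h2 obtain C where C: "\<And>i. i \<ge> length h - 1 \<Longrightarrow>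
      (\<forall>a\<in>A. C i a = \<sigma> a (prefix_of \<pi> i)) \<and> \<pi> (Suc i) = mv G (\<pi> i) (C i)"
    by metis
  define \<tau> where "\<tau> = (\<lambda>a (hs::'a list). C (length hs - 1) a)"
  define \<beta> where "\<beta> = (\<lambda>a. if a \<in> A then \<sigma> a else \<tau> a)"
  have "prefix_of \<pi> (length h - 1 + k) = ext_hist G \<beta> h k" for k
  proof (induction k)
    case 0
    have "prefix_of \<pi> (length h - 1) = h"
      using assms(1) h1 by (intro nth_equalityI) (auto simp: prefix_of_def nth_map_upt simp del: upt_Suc)
    then show ?case by simp
  next
    case (Suc k)
    define n where "n = length h - 1 + k"
    define e where "e = ext_hist G \<beta> h k"
    have en: "e = prefix_of \<pi> n" using Suc n_def e_def by simp
    have cn: "(\<lambda>a. \<beta> a e) = C n"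
    proof
      fix a show "\<beta> a e = C n a"
        using C[of n] n_def en by (auto simp: \<beta>_def \<tau>_def prefix_of_def)
    qed
    have "ext_hist G \<beta> h (Suc k) = e @ [mv G (last e) (\<lambda>a. \<beta> a e)]"
      by (simp add: e_def Let_def)
    also have "\<dots> = prefix_of \<pi> n @ [\<pi> (Suc n)]"
      using cn en C[of n] n_def by (simp add: last_prefix)
    also have "\<dots> = prefix_of \<pi> (Suc n)" by (simp add: prefix_Suc)
    finally show ?case using n_def by simp
  qed
  then show ?thesis unfolding \<beta>_def by blast
qed

lemma bind_foldr:
  "sl_sat G Ob \<beta> \<chi> h (foldr (\<lambda>a f. SLBind a a f) xs \<phi>) =
   sl_sat G Ob (\<lambda>a. if a \<in> set xs then \<chi> a else \<beta> a) \<chi> h \<phi>"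
proof (induction xs arbitrary: \<beta>)
  case Nil then show ?case by simp
next
  case (Cons x xs)
  have "(\<lambda>a. if a \<in> set xs then \<chi> a else (\<beta>(x := \<chi> x)) a) =
        (\<lambda>a. if a \<in> set (x # xs) then \<chi> a else \<beta> a)" by auto
  then show ?case using Cons by simp
qed

lemma uniform_Id: "uniform Id \<sigma>"
  unfolding uniform_def hist_indist_def by (metis (no_types, lifting) pair_in_Id_conv nth_equalityI)

lemma all_foldr:
  "sl_sat G (obs_interp R) \<beta> \<chi> h (foldr (\<lambda>a f. SLAll ObsP a f) xs \<phi>) =
   (\<forall>\<tau>. sl_sat G (obs_interp R) \<beta> (\<lambda>v. if v \<in> set xs then \<tau> v else \<chi> v) h \<phi>)"
proof (induction xs arbitrary: \<chi>)
  case Nil then show ?case by simp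
next
  case (Cons x xs)
  have u: "uniform Id \<sigma>" for \<sigma> :: "('a, 'b) strat"
    unfolding uniform_def hist_indist_def by (metis (no_types, lifting) pair_in_Id_conv nth_equalityI)
  have "sl_sat G (obs_interp R) \<beta> \<chi> h (foldr (\<lambda>a f. SLAll ObsP a f) (x # xs) \<phi>) =
     (\<forall>\<sigma> \<tau>. sl_sat G (obs_interp R) \<beta> (\<lambda>v. if v \<in> set xs then \<tau> v else (\<chi>(x := \<sigma>)) v) h \<phi>)"
    using Cons by (simp add: SLAll_def uniform_Id)
  also have "\<dots> = (\<forall>\<tau>. sl_sat G (obs_interp R) \<beta> (\<lambda>v. if v \<in> set (x # xs) then \<tau> v else \<chi> v) h \<phi>)"
  proof (intro iffI allI)
    fix \<tau>
    assume H: "\<forall>\<sigma> \<tau>. sl_sat G (obs_interp R) \<beta> (\<lambda>v. if v \<in> set xs then \<tau> v else (\<chi>(x := \<sigma>)) v) h \<phi>"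
    have "(\<lambda>v. if v \<in> set xs then \<tau> v else (\<chi>(x := \<tau> x)) v) = (\<lambda>v. if v \<in> set (x # xs) then \<tau> v else \<chi> v)"
      by auto
    then show "sl_sat G (obs_interp R) \<beta> (\<lambda>v. if v \<in> set (x # xs) then \<tau> v else \<chi> v) h \<phi>"
      using spec[OF spec[OF H, of "\<tau> x"], of \<tau>] by simp
  next
    fix \<sigma> \<tau>
    assume H: "\<forall>\<tau>. sl_sat G (obs_interp R) \<beta> (\<lambda>v. if v \<in> set (x # xs) then \<tau> v else \<chi> v) h \<phi>"
    define \<tau>' where "\<tau>' = (\<lambda>v. if v \<in> set xs then \<tau> v else if v = x then \<sigma> else \<chi> v)"
    have "(\<lambda>v. if v \<in> set (x # xs) then \<tau>' v else \<chi> v) = (\<lambda>v. if v \<in> set xs then \<tau> v else (\<chi>(x := \<sigma>)) v)"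
      by (auto simp: \<tau>'_def)
    then show "sl_sat G (obs_interp R) \<beta> (\<lambda>v. if v \<in> set xs then \<tau> v else (\<chi>(x := \<sigma>)) v) h \<phi>"
      using H[rule_format, of \<tau>'] by simp
  qed
  finally show ?case .
qed

lemma ex_foldr:
  "sl_sat G (obs_interp R) \<beta> \<chi> h (foldr (\<lambda>a f. SLEx (ObsAg a) a f) xs \<phi>) =
   (\<exists>\<tau>. (\<forall>a\<in>set xs. uniform (R a) (\<tau> a)) \<and>
      sl_sat G (obs_interp R) \<beta> (\<lambda>v. if v \<in> set xs then \<tau> v else \<chi> v) h \<phi>)"
proof (induction xs arbitrary: \<chi>)
  case Nil then show ?case by simp
next
  case (Cons x xs)
  have "sl_sat G (obs_interp R) \<beta> \<chi> h (foldr (\<lambda>a f. SLEx (ObsAg a) a f) (x # xs) \<phi>) =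
     (\<exists>\<sigma> \<tau>. uniform (R x) \<sigma> \<and> (\<forall>a\<in>set xs. uniform (R a) (\<tau> a)) \<and>
        sl_sat G (obs_interp R) \<beta> (\<lambda>v. if v \<in> set xs then \<tau> v else (\<chi>(x := \<sigma>)) v) h \<phi>)"
    using Cons by auto
  also have "\<dots> = (\<exists>\<tau>. (\<forall>a\<in>set (x # xs). uniform (R a) (\<tau> a)) \<and>
      sl_sat G (obs_interp R) \<beta> (\<lambda>v. if v \<in> set (x # xs) then \<tau> v else \<chi> v) h \<phi>)"
  proof (intro iffI)
    assume "\<exists>\<sigma> \<tau>. uniform (R x) \<sigma> \<and> (\<forall>a\<in>set xs. uniform (R a) (\<tau> a)) \<and>
        sl_sat G (obs_interp R) \<beta> (\<lambda>v. if v \<in> set xs then \<tau> v else (\<chi>(x := \<sigma>)) v) h \<phi>"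
    then obtain \<sigma> \<tau> where H: "uniform (R x) \<sigma>" "\<forall>a\<in>set xs. uniform (R a) (\<tau> a)"
      "sl_sat G (obs_interp R) \<beta> (\<lambda>v. if v \<in> set xs then \<tau> v else (\<chi>(x := \<sigma>)) v) h \<phi>" by blast
    define \<tau>' where "\<tau>' = (\<lambda>v. if v \<in> set xs then \<tau> v else if v = x then \<sigma> else \<chi> v)"
    have "(\<lambda>v. if v \<in> set (x # xs) then \<tau>' v else \<chi> v) = (\<lambda>v. if v \<in> set xs then \<tau> v else (\<chi>(x := \<sigma>)) v)"
      by (auto simp: \<tau>'_def)
    moreover have "\<forall>a\<in>set (x # xs). uniform (R a) (\<tau>' a)" using H by (auto simp: \<tau>'_def)
    ultimately show "\<exists>\<tau>. (\<forall>a\<in>set (x # xs). uniform (R a) (\<tau> a)) \<and>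
      sl_sat G (obs_interp R) \<beta> (\<lambda>v. if v \<in> set (x # xs) then \<tau> v else \<chi> v) h \<phi>"
      using H(3) by metis
  next
    assume "\<exists>\<tau>. (\<forall>a\<in>set (x # xs). uniform (R a) (\<tau> a)) \<and>
      sl_sat G (obs_interp R) \<beta> (\<lambda>v. if v \<in> set (x # xs) then \<tau> v else \<chi> v) h \<phi>"
    then obtain \<tau> where H: "\<forall>a\<in>set (x # xs). uniform (R a) (\<tau> a)"
      "sl_sat G (obs_interp R) \<beta> (\<lambda>v. if v \<in> set (x # xs) then \<tau> v else \<chi> v) h \<phi>" by blast
    have "(\<lambda>v. if v \<in> set xs then \<tau> v else (\<chi>(x := \<tau> x)) v) = (\<lambda>v. if v \<in> set (x # xs) then \<tau> v else \<chi> v)"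
      by auto
    then show "\<exists>\<sigma> \<tau>. uniform (R x) \<sigma> \<and> (\<forall>a\<in>set xs. uniform (R a) (\<tau> a)) \<and>
        sl_sat G (obs_interp R) \<beta> (\<lambda>v. if v \<in> set xs then \<tau> v else (\<chi>(x := \<sigma>)) v) h \<phi>"
      using H by (intro exI[of _ "\<tau> x"] exI[of _ \<tau>]) simp
  qed
  finally show ?case .
qed

lemma coal_sat:
  "sl_sat G (obs_interp R) \<beta> \<chi> h (coal_prefix A \<phi>) =
   (\<exists>\<tau>. (\<forall>a\<in>A. uniform (R a) (\<tau> a)) \<and>
     (\<forall>\<tau>2. sl_sat G (obs_interp R) (\<lambda>a. if a \<in> A then \<tau> a else \<tau>2 a)
                 (\<lambda>a. if a \<in> A then \<tau> a else \<tau>2 a) h \<phi>))"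
proof -
  have e1: "set (filter (\<lambda>a. a \<in> A) Enum.enum) = A" by (auto simp: enum_UNIV)
  have e2: "set (filter (\<lambda>a. a \<notin> A) Enum.enum) = - A" by (auto simp: enum_UNIV)
  have e3: "set (Enum.enum :: 'a list) = UNIV" by (simp add: enum_UNIV)
  have f: "(\<lambda>v. if v \<in> - A then \<tau>2 v else if v \<in> A then \<tau> v else \<chi> v) =
           (\<lambda>a. if a \<in> A then \<tau> a else \<tau>2 a)" for \<tau> \<tau>2 :: "'a \<Rightarrow> ('c, 'b) strat"
    by auto
  show ?thesis
    unfolding coal_prefix_def ex_foldr all_foldr bind_foldr e1 e2 e3 using f by simp
qed

lemma shift_cond:
  assumes "\<forall>m. prefix_of \<pi> (i + m) = ext_hist G \<beta> h m"
  shows "\<forall>m. prefix_of \<pi> (i + k + m) = ext_hist G \<beta> (ext_hist G \<beta> h k) m"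
  using assms ext_add by (metis add.assoc)

lemma main:
  fixes G :: "('ag::enum, 'act, 'pos, 'ap) cgs" and R :: "'ag \<Rightarrow> ('pos \<times> 'pos) set"
  shows "(\<forall>h \<beta> \<chi>. h \<noteq> [] \<longrightarrow> (atl_sat_state G R h \<phi> \<longleftrightarrow> sl_sat G (obs_interp R) \<beta> \<chi> h (tr_state \<phi>)))"
  and "(\<forall>\<pi> i h \<beta> \<chi>. (\<forall>k. prefix_of \<pi> (i + k) = ext_hist G \<beta> h k) \<longrightarrow>
      (atl_sat_path G R \<pi> i \<psi> \<longleftrightarrow> sl_sat G (obs_interp R) \<beta> \<chi> h (tr_path \<psi>)))"
proof (induction \<phi> and \<psi>)
  case (SP x)
  then show ?case by simp
next
  case (SNeg x)
  then show ?case by simp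
next
  case (SDisj x1 x2)
  then show ?case by simp
next
  case (Coal A \<psi>)
  show ?case
  proof (intro allI impI)
    fix h :: "'pos list" and \<beta> \<chi> assume hne: "h \<noteq> []"
    show "atl_sat_state G R h (Coal A \<psi>) = sl_sat G (obs_interp R) \<beta> \<chi> h (tr_state (Coal A \<psi>))"
      unfolding tr_state.simps atl_sat_state.simps coal_sat
    proof (intro iffI)
      assume "\<exists>\<sigma>. (\<forall>a\<in>A. uniform (R a) (\<sigma> a)) \<and> (\<forall>\<pi>\<in>Out G h A \<sigma>. atl_sat_path G R \<pi> (length h - 1) \<psi>)"
      then obtain \<sigma> where s: "\<forall>a\<in>A. uniform (R a) (\<sigma> a)"
        "\<forall>\<pi>\<in>Out G h A \<sigma>. atl_sat_path G R \<pi> (length h - 1) \<psi>" by blast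
      have "sl_sat G (obs_interp R) (\<lambda>a. if a \<in> A then \<sigma> a else \<tau>2 a)
                 (\<lambda>a. if a \<in> A then \<sigma> a else \<tau>2 a) h (tr_path \<psi>)" for \<tau>2
      proof -
        let ?b = "\<lambda>a. if a \<in> A then \<sigma> a else \<tau>2 a"
        have "outp G ?b h \<in> Out G h A \<sigma>" by (rule outp_in_Out[OF hne]) simp
        then have "atl_sat_path G R (outp G ?b h) (length h - 1) \<psi>" using s by blast
        then show ?thesis using Coal outp_prefix[OF hne] by blast
      qed
      then show "\<exists>\<tau>. (\<forall>a\<in>A. uniform (R a) (\<tau> a)) \<and>
       (\<forall>\<tau>2. sl_sat G (obs_interp R) (\<lambda>a. if a \<in> A then \<tau> a else \<tau>2 a)
                 (\<lambda>a. if a \<in> A then \<tau> a else \<tau>2 a) h (tr_path \<psi>))" using s by blast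
    next
      assume "\<exists>\<tau>. (\<forall>a\<in>A. uniform (R a) (\<tau> a)) \<and>
       (\<forall>\<tau>2. sl_sat G (obs_interp R) (\<lambda>a. if a \<in> A then \<tau> a else \<tau>2 a)
                 (\<lambda>a. if a \<in> A then \<tau> a else \<tau>2 a) h (tr_path \<psi>))"
      then obtain \<sigma> where s: "\<forall>a\<in>A. uniform (R a) (\<sigma> a)"
        "\<forall>\<tau>2. sl_sat G (obs_interp R) (\<lambda>a. if a \<in> A then \<sigma> a else \<tau>2 a)
                 (\<lambda>a. if a \<in> A then \<sigma> a else \<tau>2 a) h (tr_path \<psi>)" by blast
      have "atl_sat_path G R \<pi> (length h - 1) \<psi>" if pin: "\<pi> \<in> Out G h A \<sigma>" for \<pi>
      proof -
        obtain \<tau>2 where t: "\<forall>k. prefix_of \<pi> (length h - 1 + k) =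
          ext_hist G (\<lambda>a. if a \<in> A then \<sigma> a else \<tau>2 a) h k"
          using Out_strat[OF hne pin] by blast
        then show ?thesis using Coal s(2) by blast
      qed
      then show "\<exists>\<sigma>. (\<forall>a\<in>A. uniform (R a) (\<sigma> a)) \<and> (\<forall>\<pi>\<in>Out G h A \<sigma>. atl_sat_path G R \<pi> (length h - 1) \<psi>)"
        using s by blast
    qed
  qed
next
  case (PState \<phi>)
  show ?case
  proof (intro allI impI)
    fix \<pi> i h \<beta> \<chi>
    assume c: "\<forall>k. prefix_of \<pi> (i + k) = ext_hist G \<beta> h k"
    then have "prefix_of \<pi> i = h" using c[rule_format, of 0] by simp
    moreover have "prefix_of \<pi> i \<noteq> []" by (simp add: prefix_of_def)
    ultimately show "atl_sat_path G R \<pi> i (PState \<phi>) = sl_sat G (obs_interp R) \<beta> \<chi> h (tr_path (PState \<phi>))"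
      using PState by simp
  qed
next
  case (PNeg x)
  then show ?case by simp
next
  case (PDisj x1 x2)
  then show ?case by simp
next
  case (PX \<psi>)
  show ?case
  proof (intro allI impI)
    fix \<pi> i h \<beta> \<chi>
    assume c: "\<forall>k. prefix_of \<pi> (i + k) = ext_hist G \<beta> h k"
    have "\<forall>m. prefix_of \<pi> (Suc i + m) = ext_hist G \<beta> (ext_hist G \<beta> h 1) m"
      using shift_cond[OF c, of 1] by simp
    then show "atl_sat_path G R \<pi> i (PX \<psi>) = sl_sat G (obs_interp R) \<beta> \<chi> h (tr_path (PX \<psi>))"
      using PX by simp
  qed
next
  case (PU \<psi>1 \<psi>2)
  show ?case
  proof (intro allI impI)
    fix \<pi> i h \<beta> \<chi>
    assume c: "\<forall>k. prefix_of \<pi> (i + k) = ext_hist G \<beta> h k"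
    have e1: "atl_sat_path G R \<pi> (i + k) \<psi>1 = sl_sat G (obs_interp R) \<beta> \<chi> (ext_hist G \<beta> h k) (tr_path \<psi>1)" for k
      using PU(1) shift_cond[OF c, of k] by blast
    have e2: "atl_sat_path G R \<pi> (i + k) \<psi>2 = sl_sat G (obs_interp R) \<beta> \<chi> (ext_hist G \<beta> h k) (tr_path \<psi>2)" for k
      using PU(2) shift_cond[OF c, of k] by blast
    show "atl_sat_path G R \<pi> i (PU \<psi>1 \<psi>2) = sl_sat G (obs_interp R) \<beta> \<chi> h (tr_path (PU \<psi>1 \<psi>2))"
    proof
      assume "atl_sat_path G R \<pi> i (PU \<psi>1 \<psi>2)"
      then obtain k where k: "k \<ge> i" "atl_sat_path G R \<pi> k \<psi>2"
        "\<forall>j. i \<le> j \<and> j < k \<longrightarrow> atl_sat_path G R \<pi> j \<psi>1" by auto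
      have "sl_sat G (obs_interp R) \<beta> \<chi> (ext_hist G \<beta> h (k - i)) (tr_path \<psi>2)"
        using e2[of "k - i"] k by simp
      moreover have "\<forall>j<k - i. sl_sat G (obs_interp R) \<beta> \<chi> (ext_hist G \<beta> h j) (tr_path \<psi>1)"
      proof (intro allI impI)
        fix j assume "j < k - i"
        then have "i \<le> i + j \<and> i + j < k" by auto
        then show "sl_sat G (obs_interp R) \<beta> \<chi> (ext_hist G \<beta> h j) (tr_path \<psi>1)"
          using e1[of j] k(3) by blast
      qed
      ultimately show "sl_sat G (obs_interp R) \<beta> \<chi> h (tr_path (PU \<psi>1 \<psi>2))" by auto
    next
      assume "sl_sat G (obs_interp R) \<beta> \<chi> h (tr_path (PU \<psi>1 \<psi>2))"
      then obtain k where k: "sl_sat G (obs_interp R) \<beta> \<chi> (ext_hist G \<beta> h k) (tr_path \<psi>2)"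
        "\<forall>j<k. sl_sat G (obs_interp R) \<beta> \<chi> (ext_hist G \<beta> h j) (tr_path \<psi>1)" by auto
      have "atl_sat_path G R \<pi> (i + k) \<psi>2" using e2 k by simp
      moreover have "\<forall>j. i \<le> j \<and> j < i + k \<longrightarrow> atl_sat_path G R \<pi> j \<psi>1"
      proof (intro allI impI)
        fix j assume "i \<le> j \<and> j < i + k"
        then have "j = i + (j - i)" "j - i < k" by auto
        then show "atl_sat_path G R \<pi> j \<psi>1" using e1[of "j - i"] k(2) by metis
      qed
      ultimately show "atl_sat_path G R \<pi> i (PU \<psi>1 \<psi>2)" by (simp only: atl_sat_path.simps) (intro exI[of _ "i + k"], simp)
    qed
  qed
qed

theorem proposition2:
  fixes G :: "('ag::enum, 'act, 'pos, 'ap) cgs"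
    and R :: "'ag \<Rightarrow> ('pos \<times> 'pos) set"
    and \<phi> :: "('ap, 'ag) atl_state"
  assumes "finite (UNIV :: 'pos set)" and "finite (UNIV :: 'act set)"
    and "\<forall>a. equiv UNIV (R a)"
  shows "atl_models G R \<phi> \<longleftrightarrow> sl_models G (obs_interp R) (tr_state \<phi>)"
  using main(1)[of G R \<phi>] unfolding atl_models_def sl_models_def by blast

end
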